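(* Let $A=\{z\in\mathbb{C}:\operatorname{Re}z>0\}$. Let $Q_0$ be a function holomorphic in $A$ and $Q_1$ a polynomial in one complex variable. If $Q_0(w)+vQ_1(w)\ne0$ for all $v,w\in A$, then either $S(z)=Q_0(z)+Q_1'(z)\ne0$ for all $z\in A$, or $S\equiv0$ on $A$. *)

theory Defs
  imports "HOL-Complex_Analysis.Complex_Analysis" "HOL-Computational_Algebra.Polynomial"
begin

definition right_half_plane :: "complex set" where
  "right_half_plane = {z. Re z > 0}"

end

theory Submission
  imports Defs "HOL-Computational_Algebra.Fundamental_Theorem_Algebra"
begin

lemma rhp_open: "open right_half_plane"
  unfolding right_half_plane_def using open_halfspace_Re_gt[of 0] by simp

lemma rhp_connected: "connected right_half_plane"
  unfolding right_half_plane_def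
  by (rule convex_connected) (use convex_halfspace_Re_gt[of 0] in simp)

lemma logderiv_pos:
  fixes p :: "complex poly"
  shows "degree p = n \<Longrightarrow> n > 0 \<Longrightarrow> (\<forall>r. poly p r = 0 \<longrightarrow> Re r \<le> 0) \<Longrightarrow> Re z > 0
     \<Longrightarrow> Re (poly (pderiv p) z / poly p z) > 0"
proof (induction n arbitrary: p)
  case 0
  then show ?case by simp
next
  case (Suc n)
  have "\<not> constant (poly p)" using Suc.prems(1) constant_degree[of p] by simp
  then obtain r where r: "poly p r = 0" using fundamental_theorem_of_algebra by blast
  then obtain q where pq: "p = [:-r,1:] * q" using poly_eq_0_iff_dvd by (metis dvdE)
  have p0: "p \<noteq> 0" using Suc.prems(1) by auto
  then have q0: "q \<noteq> 0" using pq by auto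
  have "degree p = degree [:-r,1:] + degree q" unfolding pq by (rule degree_mult_eq) (use q0 in auto)
  then have dq: "degree q = n" using Suc.prems(1) by simp
  have rr: "Re r \<le> 0" using Suc.prems(3) r by blast
  have qroots: "\<forall>s. poly q s = 0 \<longrightarrow> Re s \<le> 0" using Suc.prems(3) pq by auto
  have zr: "z - r \<noteq> 0" using rr Suc.prems(4) by auto
  have qz: "poly q z \<noteq> 0" using qroots Suc.prems(4) by force
  have pd0: "pderiv p = pderiv [:-r,1:] * q + [:-r,1:] * pderiv q" unfolding pq by (metis pderiv_mult mult.commute add.commute)
  have "pderiv [:-r,1:] = 1" by (simp add: pderiv_pCons)
  then have pd: "pderiv p = q + [:-r,1:] * pderiv q" using pd0 by simp
  have eq: "poly (pderiv p) z / poly p z = 1 / (z - r) + poly (pderiv q) z / poly q z"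
  proof -
    have a: "poly (pderiv p) z = poly q z + (z - r) * poly (pderiv q) z" by (simp add: pd left_diff_distrib)
    have b: "poly p z = (z - r) * poly q z" by (simp add: pq left_diff_distrib)
    show ?thesis unfolding a b using zr qz by (simp add: field_simps)
  qed
  have "Re (1 / (z - r)) > 0"
  proof -
    have "Re (z - r) > 0" using rr Suc.prems(4) by simp
    moreover have "Re (1 / (z - r)) = Re (z - r) / ((Re (z - r))^2 + (Im (z - r))^2)"
      by (simp add: Re_divide)
    moreover have "(Re (z - r))^2 + (Im (z - r))^2 > 0" using calculation(1)
      by (simp add: add_pos_nonneg)
    ultimately show ?thesis by simp
  qed
  moreover have "Re (poly (pderiv q) z / poly q z) \<ge> 0"
  proof (cases "n = 0")
    case True
    then have "pderiv q = 0" using dq by (simp add: pderiv_eq_0_iff)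
    then show ?thesis by simp
  next
    case False
    then show ?thesis using Suc.IH[OF dq _ qroots Suc.prems(4)] by fastforce
  qed
  ultimately show ?case unfolding eq by simp
qed

theorem lemma2p2:
  fixes Q0 :: "complex \<Rightarrow> complex" and Q1 :: "complex poly"
  assumes "Q0 holomorphic_on right_half_plane"
    and "\<forall>v\<in>right_half_plane. \<forall>w\<in>right_half_plane. Q0 w + v * poly Q1 w \<noteq> 0"
  shows "(\<forall>z\<in>right_half_plane. Q0 z + poly (pderiv Q1) z \<noteq> 0)
       \<or> (\<forall>z\<in>right_half_plane. Q0 z + poly (pderiv Q1) z = 0)"
proof -
  let ?A = right_half_plane
  have hol: "Q0 holomorphic_on ?A" and H: "\<And>v w::complex. v \<in> ?A \<Longrightarrow> w \<in> ?A \<Longrightarrow> Q0 w + v * poly Q1 w \<noteq> 0"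
    using assms by auto
  have inA: "z \<in> ?A \<longleftrightarrow> Re z > 0" for z unfolding right_half_plane_def by simp
  have one: "1 \<in> ?A" using inA by simp
  show ?thesis
  proof (cases "Q1 = 0")
    case True
    then show ?thesis using H[OF one] by simp
  next
    case Q1nz: False
    show ?thesis
    proof (cases "degree Q1 = 0")
      case True
      then obtain c where c: "Q1 = [:c:]" using degree_eq_zeroE by blast
      with Q1nz have c0: "c \<noteq> 0" by simp
      have pd: "pderiv Q1 = 0" using c by simp
      show ?thesis
      proof (cases "Q0 constant_on ?A")
        case True
        then obtain k where k: "\<And>z. z \<in> ?A \<Longrightarrow> Q0 z = k" unfolding constant_on_def by blast
        show ?thesis using k pd by simp
      next
        case False
        have opn: "open (Q0 ` ?A)"
          by (rule open_mapping_thm[OF hol rhp_open rhp_connected rhp_open order_refl False])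
        {
          fix z assume zA: "z \<in> ?A" and z0: "Q0 z = 0"
          then have "0 \<in> Q0 ` ?A" by force
          then obtain e where e: "e > 0" "ball 0 e \<subseteq> Q0 ` ?A" using opn open_contains_ball by blast
          define u where "u = - of_real (e/2) * c / of_real (cmod c)"
          have "cmod u = e/2" using c0 e by (simp add: u_def norm_mult norm_divide)
          then have "u \<in> ball 0 e" using e by simp
          then obtain w where wA: "w \<in> ?A" and w: "Q0 w = u" using e by blast
          define v :: complex where "v = of_real (e / 2 / cmod c)"
          have vA: "v \<in> ?A" using e c0 inA by (simp add: v_def)
          have "Q0 w + v * poly Q1 w = 0" using c0 by (simp add: w u_def v_def c field_simps)
          with H[OF vA wA] have False by simp
        }
        then show ?thesis using pd by auto
      qed
    next
      case degpos: False
      have noroot: "Re r \<le> 0" if r: "poly Q1 r = 0" for r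
      proof (rule ccontr)
        assume "\<not> Re r \<le> 0"
        then have rA: "r \<in> ?A" using inA by simp
        have q0r: "Q0 r \<noteq> 0" using H[OF one rA] r by simp
        have "continuous_on ?A Q0" using hol holomorphic_on_imp_continuous_on by blast
        then have ic: "isCont Q0 r" using rhp_open rA continuous_on_eq_continuous_at by blast
        obtain d1 where d1: "d1 > 0" "\<And>w. dist r w < d1 \<Longrightarrow> Q0 w \<noteq> 0"
          using continuous_at_avoid[OF ic q0r] by blast
        obtain d2 where d2: "d2 > 0" "ball r d2 \<subseteq> ?A" using rhp_open rA open_contains_ball by blast
        define d where "d = min d1 d2"
        define B where "B = ball r d"
        have d: "d > 0" using d1 d2 by (simp add: d_def)
        have BA: "B \<subseteq> ?A" using d2 by (auto simp: B_def d_def)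
        have Bnz: "Q0 w \<noteq> 0" if "w \<in> B" for w using d1 that by (auto simp: B_def d_def)
        define h where "h w = - poly Q1 w / Q0 w" for w
        have holh: "h holomorphic_on B" unfolding h_def
          by (intro holomorphic_intros holomorphic_on_subset[OF hol BA]) (use Bnz in auto)
        have nc: "\<not> h constant_on B"
        proof
          assume "h constant_on B"
          then obtain k where k: "\<And>w. w \<in> B \<Longrightarrow> h w = k" unfolding constant_on_def by blast
          have "h r = 0" by (simp add: h_def r)
          then have "k = 0" using k[of r] d by (simp add: B_def)
          then have "\<And>w. w \<in> B \<Longrightarrow> poly Q1 w = 0" using k Bnz by (simp add: h_def)
          then have "B \<subseteq> {x. poly Q1 x = 0}" by blast
          moreover have "infinite B" using finite_imp_not_open[of B] d by (auto simp: B_def)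
          ultimately show False using poly_roots_finite[OF Q1nz] finite_subset by blast
        qed
        have opn: "open (h ` B)"
          by (rule open_mapping_thm[OF holh _ _ _ order_refl nc]) (auto simp: B_def)
        have "r \<in> B" using d by (simp add: B_def)
        moreover have "h r = 0" by (simp add: h_def r)
        ultimately have "0 \<in> h ` B" by (metis rev_image_eqI)
        then obtain e where e: "e > 0" "ball 0 e \<subseteq> h ` B" using opn open_contains_ball by blast
        have "complex_of_real (e/2) \<in> ball 0 e" using e by (simp add: dist_norm)
        then have "complex_of_real (e/2) \<in> h ` B" using e(2) by (rule subsetD[rotated])
        then obtain w where wB: "w \<in> B" and w: "h w = of_real (e/2)" by (metis imageE)
        define v :: complex where "v = of_real (2/e)"
        have vA: "v \<in> ?A" using e inA by (simp add: v_def)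
        have "poly Q1 w = - of_real (e/2) * Q0 w" using w Bnz[OF wB] by (simp add: h_def field_simps) (metis minus_minus)
        then have "Q0 w + v * poly Q1 w = 0" using e by (simp add: v_def field_simps)
        with H[OF vA] wB BA show False by blast
      qed
      {
        fix z assume zA: "z \<in> ?A"
        have q1z: "poly Q1 z \<noteq> 0" using noroot zA inA by force
        have re0: "Re (Q0 z / poly Q1 z) \<ge> 0"
        proof (rule ccontr)
          assume "\<not> ?thesis"
          then have "- (Q0 z / poly Q1 z) \<in> ?A" using inA by simp
          from H[OF this zA] q1z show False by (simp add: field_simps)
        qed
        have "Re (poly (pderiv Q1) z / poly Q1 z) > 0"
          using logderiv_pos[OF refl] degpos noroot zA inA by blast
        with re0 have "Re ((Q0 z + poly (pderiv Q1) z) / poly Q1 z) > 0"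
          by (simp add: add_divide_distrib)
        then have "Q0 z + poly (pderiv Q1) z \<noteq> 0" by auto
      }
      then show ?thesis by blast
    qed
  qed
qed

end
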